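(* Let $(k_n)$ be a sequence of positive integers with $k_n\ll n$ (i.e. $k_n/n\to0$). Let $G_n$ be the Erdős–Rényi random graph on $\mathcal C^0_n$ with any edge probability $p_n\in(0,1)$, $R_n$ its associated reaction network, and let $A_n$ be the event that every reaction vector $y'-y$ of $R_n$ has exactly $4$ non-zero components. Then for all sufficiently large $n$, \[ \mathbb P(A_n\mid R_n\text{ is }k_n\text{-paired})\ge 1-\frac{21k_n}{n}. \]
   Context: Let $e_i$ be the $i$-th standard basis vector of $\mathbb Z^n$ and $\mathcal C^0_n=\{0\}\cup\{e_i:1\le i\le n\}\cup\{e_i+e_j:1\le i\le j\le n\}$, so $N_n=|\mathcal C^0_n|=\frac{n^2+3n+2}{2}$. $G_n$ is the Erdős–Rényi random graph on vertex set $\mathcal C^0_n$ in which each of the $\binom{N_n}{2}$ possible undirected edges is present independently with probability $p_n$. The associated reaction network $R_n$ has species $S_1,\dots,S_n$, complex set equal to the set of vertices of $G_n$ of positive degree, and for each edge $\{y,y'\}$ of $G_n$ the two reactions $y\to y'$ and $y'\to y$. A reaction network is paired if each connected component of its graph contains exactly two complexes, and $i$-paired if it is paired with exactly $i$ connected components; thus $R_n$ is $k$-paired exactly when $G_n$ is a matching with $k$ edges (plus isolated vertices). Conditioned on $R_n$ being $k_n$-paired, $G_n$ is uniformly distributed over all such matchings. *)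

theory Defs
  imports Complex_Main
begin

text \<open>Vectors of Z^n are represented as functions nat => int, with coordinates
  indexed by 1..n (all other coordinates are zero).\<close>

definition unitvec :: "nat \<Rightarrow> nat \<Rightarrow> int" where
  "unitvec i = (\<lambda>k. if k = i then 1 else 0)"

definition C0 :: "nat \<Rightarrow> (nat \<Rightarrow> int) set" where
  "C0 n = {\<lambda>_. 0} \<union> {unitvec i | i. 1 \<le> i \<and> i \<le> n}
        \<union> {(\<lambda>k. unitvec i k + unitvec j k) | i j. 1 \<le> i \<and> i \<le> j \<and> j \<le> n}"

definition possible_edges :: "nat \<Rightarrow> (nat \<Rightarrow> int) set set" where
  "possible_edges n = {{y, y'} | y y'. y \<in> C0 n \<and> y' \<in> C0 n \<and> y \<noteq> y'}"

text \<open>A graph G_n is given by its edge set E \<subseteq> possible_edges n. Erdos-Renyi probability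
  of a set S of graphs (edge sets), with edge probability p.\<close>
definition er_prob :: "nat \<Rightarrow> real \<Rightarrow> (nat \<Rightarrow> int) set set set \<Rightarrow> real" where
  "er_prob n p S = (\<Sum>E \<in> S \<inter> Pow (possible_edges n).
      p ^ card E * (1 - p) ^ (card (possible_edges n) - card E))"

definition er_cond_prob :: "nat \<Rightarrow> real \<Rightarrow> (nat \<Rightarrow> int) set set set
      \<Rightarrow> (nat \<Rightarrow> int) set set set \<Rightarrow> real" where
  "er_cond_prob n p A B = er_prob n p (A \<inter> B) / er_prob n p B"

text \<open>The reaction network of E is k-paired: every connected component contains exactly
  two complexes and there are exactly k components, i.e. E is a matching with k edges.\<close>
definition k_paired :: "nat \<Rightarrow> (nat \<Rightarrow> int) set set \<Rightarrow> bool" where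
  "k_paired k E \<longleftrightarrow> (\<forall>e1\<in>E. \<forall>e2\<in>E. e1 \<noteq> e2 \<longrightarrow> e1 \<inter> e2 = {}) \<and> card E = k"

definition all_reactions_four :: "(nat \<Rightarrow> int) set set \<Rightarrow> bool" where
  "all_reactions_four E \<longleftrightarrow>
     (\<forall>y y'. {y, y'} \<in> E \<and> y \<noteq> y' \<longrightarrow> card {i. y' i - y i \<noteq> 0} = 4)"

end

theory Submission
  imports Defs
begin


definition edges :: "'a set \<Rightarrow> 'a set set" where
  "edges V = {e. e \<subseteq> V \<and> card e = 2}"

definition mat :: "'a set \<Rightarrow> nat \<Rightarrow> 'a set set set" where
  "mat V k = {M. M \<subseteq> edges V \<and> (\<forall>e1\<in>M. \<forall>e2\<in>M. e1 \<noteq> e2 \<longrightarrow> e1 \<inter> e2 = {}) \<and> card M = k}"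

lemma finite_edges: "finite V \<Longrightarrow> finite (edges V)"
  unfolding edges_def by (rule finite_subset[of _ "Pow V"]) auto

lemma finite_mat: "finite V \<Longrightarrow> finite (mat V k)"
  unfolding mat_def by (rule finite_subset[of _ "Pow (edges V)"]) (auto simp: finite_edges)

lemma mat_containing:
  assumes V: "finite V" and e: "e \<in> edges V" and k: "k \<ge> 1"
  shows "card {M \<in> mat V k. e \<in> M} = card (mat (V - e) (k-1))"
proof -
  have fe: "finite (edges V)" using V finite_edges by blast
  have ene: "e \<noteq> {}" using e by (auto simp: edges_def)
  have "bij_betw (\<lambda>M. M - {e}) {M \<in> mat V k. e \<in> M} (mat (V - e) (k-1))"
  proof (rule bij_betw_byWitness[where f' = "insert e"])
    show "\<forall>a\<in>{M \<in> mat V k. e \<in> M}. insert e (a - {e}) = a" by auto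
    show "\<forall>a'\<in>mat (V - e) (k - 1). insert e a' - {e} = a'"
      using ene by (auto simp: mat_def edges_def)
    show "(\<lambda>M. M - {e}) ` {M \<in> mat V k. e \<in> M} \<subseteq> mat (V - e) (k - 1)"
    proof safe
      fix M assume M: "M \<in> mat V k" "e \<in> M"
      have fM: "finite M" using M fe by (auto simp: mat_def intro: finite_subset)
      have "M - {e} \<subseteq> edges (V - e)"
      proof
        fix x assume x: "x \<in> M - {e}"
        then have "x \<inter> e = {}" "x \<subseteq> V" "card x = 2" using M by (auto simp: mat_def edges_def)
        then show "x \<in> edges (V - e)" by (auto simp: edges_def)
      qed
      then show "M - {e} \<in> mat (V - e) (k - 1)"
        using M fM unfolding mat_def by auto
    qed
    show "insert e ` mat (V - e) (k - 1) \<subseteq> {M \<in> mat V k. e \<in> M}"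
    proof safe
      fix M assume M: "M \<in> mat (V - e) (k - 1)"
      have fM: "finite M" using M finite_edges[of "V - e"] V by (auto simp: mat_def intro: finite_subset)
      have eM: "e \<notin> M" using M ene by (auto simp: mat_def edges_def)
      have "card (insert e M) = k" using M fM eM k by (auto simp: mat_def)
      moreover have "insert e M \<subseteq> edges V" using M e by (auto simp: mat_def edges_def)
      moreover have "\<forall>e1\<in>insert e M. \<forall>e2\<in>insert e M. e1 \<noteq> e2 \<longrightarrow> e1 \<inter> e2 = {}"
        using M by (auto simp: mat_def edges_def)
      ultimately show "insert e M \<in> mat V k" by (simp add: mat_def)
    qed
  qed
  then show ?thesis by (rule bij_betw_same_card)
qed

lemma mat_card_le:
  assumes inj: "inj_on f V" and W: "f ` V \<subseteq> W" "finite W"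
  shows "card (mat V j) \<le> card (mat W j)"
proof -
  have "inj_on (image (image f)) (Pow (Pow V))"
    by (intro inj_on_image_Pow inj)
  moreover have "mat V j \<subseteq> Pow (Pow V)" by (auto simp: mat_def edges_def)
  ultimately have I1: "inj_on (image (image f)) (mat V j)" by (rule inj_on_subset)
  have I2: "finite (mat W j)" using W finite_mat by blast
  have I3: "image (image f) ` mat V j \<subseteq> mat W j"
  proof safe
    fix M assume M: "M \<in> mat V j"
    have sub: "M \<subseteq> Pow V" using M by (auto simp: mat_def edges_def)
    have injM: "inj_on (image f) M"
      using inj_on_subset[OF inj_on_image_Pow[OF inj] sub] .
    have "card (image f ` M) = j" using M card_image[OF injM] by (simp add: mat_def)
    moreover have "image f ` M \<subseteq> edges W"
    proof
      fix x assume "x \<in> image f ` M"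
      then obtain e where e: "e \<in> M" "x = f ` e" by auto
      have "e \<subseteq> V" "card e = 2" using M e by (auto simp: mat_def edges_def)
      then have "card (f ` e) = 2" using inj by (metis card_image inj_on_subset)
      then show "x \<in> edges W" using e W \<open>e \<subseteq> V\<close> by (auto simp: edges_def)
    qed
    moreover have "\<forall>e1\<in>image f ` M. \<forall>e2\<in>image f ` M. e1 \<noteq> e2 \<longrightarrow> e1 \<inter> e2 = {}"
    proof (intro ballI impI)
      fix x1 x2 assume h0: "x1 \<in> image f ` M" "x2 \<in> image f ` M" "x1 \<noteq> x2"
      then obtain e1 e2 where h: "e1 \<in> M" "e2 \<in> M" "f ` e1 \<noteq> f ` e2" "x1 = f ` e1" "x2 = f ` e2" by blast
      have "e1 \<noteq> e2" using h(3) by auto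
      then have "e1 \<inter> e2 = {}" using M h(1,2) by (auto simp: mat_def)
      have "e1 \<subseteq> V" "e2 \<subseteq> V" using M h(1,2) by (auto simp: mat_def edges_def)
      then have "f ` e1 \<inter> f ` e2 = f ` (e1 \<inter> e2)" using inj_on_image_Int[OF inj] by blast
      then show "x1 \<inter> x2 = {}" using \<open>e1 \<inter> e2 = {}\<close> h by auto
    qed
    ultimately show "image f ` M \<in> mat W j" by (simp add: mat_def)
  qed
  show ?thesis by (rule card_inj_on_le[OF I1 I3 I2])
qed

lemma mat_card_eq:
  assumes "finite V" "finite W" "card V = card W"
  shows "card (mat V j) = card (mat W j)"
proof -
  obtain h where h: "bij_betw h V W" using finite_same_card_bij assms by blast
  have "card (mat V j) \<le> card (mat W j)"
    using h assms by (intro mat_card_le[of h]) (auto simp: bij_betw_def)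
  moreover have "card (mat W j) \<le> card (mat V j)"
    using bij_betw_inv_into[OF h] assms by (intro mat_card_le[of "inv_into V h"]) (auto simp: bij_betw_def)
  ultimately show ?thesis by simp
qed

lemma double_count:
  assumes V: "finite V"
  shows "(\<Sum>e\<in>edges V. card {M\<in>mat V k. e\<in>M}) = k * card (mat V k)"
proof -
  have fe: "finite (edges V)" and fm: "finite (mat V k)" using V finite_edges finite_mat by auto
  have "(\<Sum>e\<in>edges V. card {M\<in>mat V k. e\<in>M}) = (\<Sum>e\<in>edges V. \<Sum>M\<in>mat V k. if e \<in> M then 1 else 0)"
    using fm by (simp add: sum.inter_filter[symmetric])
  also have "\<dots> = (\<Sum>M\<in>mat V k. \<Sum>e\<in>edges V. if e \<in> M then 1 else 0)"
    by (rule sum.swap)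
  also have "\<dots> = (\<Sum>M\<in>mat V k. card {e \<in> edges V. e \<in> M})"
    using fe by (simp add: sum.inter_filter[symmetric])
  also have "\<dots> = (\<Sum>M\<in>mat V k. k)"
  proof (rule sum.cong)
    fix M assume "M \<in> mat V k"
    then have "{e \<in> edges V. e \<in> M} = M" "card M = k" by (auto simp: mat_def)
    then show "card {e \<in> edges V. e \<in> M} = k" by simp
  qed simp
  finally show ?thesis by simp
qed

lemma mat_exists:
  assumes "finite V" "2 * k \<le> card V"
  shows "mat V k \<noteq> {}"
  using assms
proof (induction k arbitrary: V)
  case 0
  have "{} \<in> mat V 0" by (simp add: mat_def)
  then show ?case by blast
next
  case (Suc k)
  then have "card V \<ge> 2" by simp
  then obtain x y where xy: "x \<in> V" "y \<in> V" "x \<noteq> y"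
    by (metis One_nat_def Suc_1 Suc_le_eq card_le_Suc0_iff_eq linorder_not_le Suc.prems(1))
  let ?W = "V - {x, y}"
  have "card ?W = card V - 2" using xy Suc.prems by (simp add: card_Diff_subset)
  then have "2 * k \<le> card ?W" using Suc.prems by simp
  then obtain M where M: "M \<in> mat ?W k" using Suc.IH[of ?W] Suc.prems by auto
  have fM: "finite M" using M finite_mat[of ?W] finite_edges[of ?W] Suc.prems
    by (auto simp: mat_def intro: finite_subset)
  have nM: "{x,y} \<notin> M" using M by (auto simp: mat_def edges_def)
  have "insert {x,y} M \<in> mat V (Suc k)"
    using M fM nM xy by (auto simp: mat_def edges_def)
  then show ?case by blast
qed

lemma ratio_bound:
  assumes V: "finite V" and k: "k \<ge> 1" and ne: "mat V k \<noteq> {}"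
  shows "real (card {M\<in>mat V k. \<forall>e\<in>M. g e}) / real (card (mat V k))
     \<ge> 1 - real k * real (card {e \<in> edges V. \<not> g e}) / real (card (edges V))"
proof -
  define m where "m = card (mat V k)"
  define c where "c = card (mat {..<card V - 2} (k-1))"
  define Ed where "Ed = card (edges V)"
  define Bd where "Bd = {e \<in> edges V. \<not> g e}"
  define Gd where "Gd = {M\<in>mat V k. \<forall>e\<in>M. g e}"
  have fe: "finite (edges V)" and fm: "finite (mat V k)" using V finite_edges finite_mat by auto
  have mpos: "m > 0" using ne fm by (simp add: m_def card_gt_0_iff)
  have ce: "card {M\<in>mat V k. e\<in>M} = c" if e: "e \<in> edges V" for e
  proof -
    have "e \<subseteq> V" "card e = 2" using e by (auto simp: edges_def)
    moreover then have "finite e" by (metis card.infinite zero_neq_numeral)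
    ultimately have "card (V - e) = card {..<card V - 2}" using V by (simp add: card_Diff_subset)
    then show ?thesis unfolding c_def using mat_containing[OF V e k] mat_card_eq[of "V-e" "{..<card V - 2}"] V by auto
  qed
  have Ec: "Ed * c = k * m"
    using double_count[OF V, of k] ce by (simp add: Ed_def m_def)
  have Edpos: "Ed > 0"
  proof (rule ccontr)
    assume "\<not> Ed > 0"
    then have "Ed = 0" by simp
    then have "edges V = {}" using fe Ed_def by simp
    obtain M where M: "M \<in> mat V k" using ne by blast
    then have "M \<subseteq> edges V" "card M = k" by (auto simp: mat_def)
    then show False using \<open>edges V = {}\<close> k by simp
  qed
  have sub: "mat V k - Gd \<subseteq> (\<Union>e\<in>Bd. {M\<in>mat V k. e\<in>M})"
  proof
    fix M assume M: "M \<in> mat V k - Gd"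
    then obtain e where e: "e \<in> M" "\<not> g e" by (auto simp: Gd_def)
    have "e \<in> edges V" using M e by (auto simp: mat_def)
    then have "e \<in> Bd" using e by (simp add: Bd_def)
    then show "M \<in> (\<Union>e\<in>Bd. {M\<in>mat V k. e\<in>M})" using M e by blast
  qed
  have fB: "finite Bd" using fe by (simp add: Bd_def)
  have "card (mat V k - Gd) \<le> card (\<Union>e\<in>Bd. {M\<in>mat V k. e\<in>M})"
    using sub fm fB by (intro card_mono) auto
  also have "\<dots> \<le> (\<Sum>e\<in>Bd. card {M\<in>mat V k. e\<in>M})" using fB by (rule card_UN_le)
  also have "\<dots> = card Bd * c" using ce by (simp add: Bd_def)
  finally have b1: "card (mat V k - Gd) \<le> card Bd * c" .
  have GdS: "Gd \<subseteq> mat V k" by (auto simp: Gd_def)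
  then have "card (mat V k - Gd) = m - card Gd" "card Gd \<le> m"
    using fm by (auto simp: m_def card_Diff_subset finite_subset card_mono)
  then have "m \<le> card Gd + card Bd * c" using b1 by linarith
  then have "real m \<le> real (card Gd + card Bd * c)" by (simp only: of_nat_le_iff)
  then have G: "real (card Gd) \<ge> real m - real (card Bd) * real c" by simp
  have "real Ed * real c = real k * real m" using Ec by (metis of_nat_mult)
  then have "real c = real k * real m / real Ed" using Edpos
    by (simp add: field_simps)
  then have "real (card Gd) / real m \<ge> (real m - real (card Bd) * (real k * real m / real Ed)) / real m"
    using G mpos by (intro divide_right_mono) auto
  also have "(real m - real (card Bd) * (real k * real m / real Ed)) / real m
      = 1 - real k * real (card Bd) / real Ed" using mpos Edpos by (simp add: field_simps)
  finally show ?thesis by (simp add: Gd_def Bd_def m_def Ed_def)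
qed



lemma arith_main:
  fixes x y :: real
  assumes x: "x \<ge> 30" and y: "2 * y \<ge> x * (x - 1)"
  shows "x * ((2 * x + 1) * y + x ^ 3) \<le> 21 * (y * (y - 1) / 2)"
proof -
  have y0: "y \<ge> (x^2 - x) / 2" using y by (simp add: power2_eq_square algebra_simps)
  have q: "21 * y - 21 - 4 * x^2 - 2 * x \<ge> 6 * x^2"
  proof -
    have "21 * y \<ge> 21 * ((x^2 - x) / 2)" using y0 by simp
    moreover have "x^2 \<ge> 30 * x" using x by (simp add: power2_eq_square)
    ultimately show ?thesis using x by (simp add: field_simps) 
  qed
  have yp: "(x^2 - x)/2 \<ge> 0" using x by (simp add: power2_eq_square)
  have "y * (21 * y - 21 - 4 * x^2 - 2 * x) \<ge> ((x^2 - x)/2) * (6 * x^2)"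
    using q y0 yp by (intro mult_mono) auto
  moreover have "((x^2 - x)/2) * (6 * x^2) \<ge> 2 * x^4"
  proof -
    have "x^3 \<ge> 3 * x^2 * 1" using x by (simp add: power3_eq_cube power2_eq_square mult_mono)
    then have "x * x^3 \<ge> x * (3 * x^2)" using x by (intro mult_left_mono) auto
    then have h: "3*(x*x*x) \<le> x*x*x*x" by (simp add: power2_eq_square power3_eq_cube algebra_simps)
    show ?thesis using h by (simp add: power2_eq_square power4_eq_xxxx algebra_simps)
  qed
  ultimately have "y * (21 * y - 21 - 4 * x^2 - 2 * x) \<ge> 2 * x^4" by linarith
  then show ?thesis by (simp add: field_simps power2_eq_square power3_eq_cube power4_eq_xxxx)
qed



definition s :: "nat \<Rightarrow> nat \<Rightarrow> nat \<Rightarrow> int" where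
  "s i j = (\<lambda>k. unitvec i k + unitvec j k)"

definition V1 :: "nat \<Rightarrow> (nat \<Rightarrow> int) set" where
  "V1 n = insert (\<lambda>_. 0) (unitvec ` {1..n} \<union> (\<lambda>i. s i i) ` {1..n})"

definition good_e :: "(nat \<Rightarrow> int) set \<Rightarrow> bool" where
  "good_e e \<longleftrightarrow> (\<forall>y y'. {y, y'} = e \<and> y \<noteq> y' \<longrightarrow> card {i. y' i - y i \<noteq> 0} = 4)"

lemma s_comm: "s i j = s j i"
  by (auto simp: s_def)

lemma C0_alt: "C0 n = V1 n \<union> {s a b | a b. 1 \<le> a \<and> a < b \<and> b \<le> n}"
proof
  show "C0 n \<subseteq> V1 n \<union> {s a b | a b. 1 \<le> a \<and> a < b \<and> b \<le> n}"
  proof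
    fix y assume "y \<in> C0 n"
    then consider "y = (\<lambda>_. 0)" | i where "1 \<le> i" "i \<le> n" "y = unitvec i"
      | i j where "1 \<le> i" "i \<le> j" "j \<le> n" "y = s i j"
      unfolding C0_def s_def by blast
    then show "y \<in> V1 n \<union> {s a b | a b. 1 \<le> a \<and> a < b \<and> b \<le> n}"
    proof cases
      case 1 then show ?thesis by (simp add: V1_def)
    next
      case 2 then show ?thesis by (simp add: V1_def)
    next
      case (3 i j)
      show ?thesis
      proof (cases "i = j")
        case True then show ?thesis using 3 by (simp add: V1_def)
      next
        case False then have "i < j" using 3 by simp
        then show ?thesis using 3 by blast
      qed
    qed
  qed
  show "V1 n \<union> {s a b | a b. 1 \<le> a \<and> a < b \<and> b \<le> n} \<subseteq> C0 n"
  proof -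
    have "s i j \<in> C0 n" if "1 \<le> i" "i \<le> j" "j \<le> n" for i j
      using that unfolding C0_def s_def by blast
    moreover have "unitvec i \<in> C0 n" if "1 \<le> i" "i \<le> n" for i
      using that unfolding C0_def by blast
    moreover have "(\<lambda>_. 0) \<in> C0 n" unfolding C0_def by blast
    ultimately show ?thesis unfolding V1_def by fastforce
  qed
qed

lemma finite_C0: "finite (C0 n)"
proof -
  have "{s a b | a b. 1 \<le> a \<and> a < b \<and> b \<le> n} \<subseteq> (\<lambda>(i,j). s i j) ` ({1..n}\<times>{1..n})"
    by auto
  moreover have "finite ((\<lambda>(i,j). s i j) ` ({1..n}\<times>{1..n}))" by simp
  ultimately have "finite {s a b | a b. 1 \<le> a \<and> a < b \<and> b \<le> n}" by (rule finite_subset)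
  moreover have "finite (V1 n)" by (simp add: V1_def)
  ultimately show ?thesis unfolding C0_alt by simp
qed

lemma V1_sub: "V1 n \<subseteq> C0 n" by (simp add: C0_alt)

lemma card_V1: "card (V1 n) \<le> 2 * n + 1"
proof -
  have "card (V1 n) \<le> Suc (card (unitvec ` {1..n} \<union> (\<lambda>i. s i i) ` {1..n}))"
    unfolding V1_def by (rule card_insert_le_m1) auto
  also have "card (unitvec ` {1..n} \<union> (\<lambda>i. s i i) ` {1..n}) \<le> card (unitvec ` {1..n}) + card ((\<lambda>i. s i i) ` {1..n})"
    by (rule card_Un_le)
  also have "\<dots> \<le> n + n" using card_image_le[of "{1..n}" unitvec] card_image_le[of "{1..n}" "\<lambda>i. s i i"]
    by simp
  finally show ?thesis by simp
qed

lemma pe: "possible_edges n = edges (C0 n)"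
  unfolding possible_edges_def edges_def by (auto simp: card_2_iff)

lemma card_C0: "n choose 2 \<le> card (C0 n)"
proof -
  define ind :: "nat set \<Rightarrow> nat \<Rightarrow> int" where "ind S = (\<lambda>k. if k \<in> S then 1 else 0)" for S
  have inj: "inj_on ind {S. S \<subseteq> {1..n} \<and> card S = 2}"
  proof (rule inj_onI)
    fix S T assume "ind S = ind T"
    then have "\<forall>k. (k \<in> S) = (k \<in> T)" unfolding ind_def by (metis one_neq_zero)
    then show "S = T" by blast
  qed
  have im: "ind ` {S. S \<subseteq> {1..n} \<and> card S = 2} \<subseteq> C0 n"
  proof
    fix z assume "z \<in> ind ` {S. S \<subseteq> {1..n} \<and> card S = 2}"
    then obtain S where S: "S \<subseteq> {1..n}" "card S = 2" "z = ind S" by auto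
    then obtain i j where ij: "S = {i,j}" "i < j"
      by (metis card_2_iff insert_commute linorder_neqE_nat)
    have "z = s i j" using ij S(3) by (auto simp: ind_def s_def unitvec_def)
    moreover have "1 \<le> i" "j \<le> n" using S ij by auto
    ultimately show "z \<in> C0 n" using ij by (auto simp: C0_alt)
  qed
  have "card {S. S \<subseteq> {1..n} \<and> card S = 2} = n choose 2" by (simp add: n_subsets)
  moreover have "card {S. S \<subseteq> {1..n} \<and> card S = 2} \<le> card (C0 n)"
    using inj im finite_C0 by (rule card_inj_on_le)
  ultimately show ?thesis by simp
qed

lemma good4:
  assumes "a \<noteq> b" "a \<noteq> c" "a \<noteq> d" "b \<noteq> c" "b \<noteq> d" "c \<noteq> d"
  shows "card {i. s c d i - s a b i \<noteq> 0} = 4"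
proof -
  have "{i. s c d i - s a b i \<noteq> 0} = {a,b,c,d}"
    using assms by (auto simp: s_def unitvec_def)
  then show ?thesis using assms by simp
qed

definition B2 :: "nat \<Rightarrow> (nat \<Rightarrow> int) set set" where
  "B2 n = (\<lambda>(i,j,l). {s i j, s i l}) ` ({1..n}\<times>{1..n}\<times>{1..n})"

definition B1 :: "nat \<Rightarrow> (nat \<Rightarrow> int) set set" where
  "B1 n = (\<lambda>(u,v). {u,v}) ` (V1 n \<times> C0 n)"

lemma bad_sub: "{e \<in> edges (C0 n). \<not> good_e e} \<subseteq> B1 n \<union> B2 n"
proof
  fix e assume e: "e \<in> {e \<in> edges (C0 n). \<not> good_e e}"
  then obtain y y' where yy: "e = {y, y'}" "y \<noteq> y'" "y \<in> C0 n" "y' \<in> C0 n"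
    by (auto simp: edges_def card_2_iff)
  show "e \<in> B1 n \<union> B2 n"
  proof (cases "y \<in> V1 n \<or> y' \<in> V1 n")
    case True
    then show ?thesis
    proof
      assume "y \<in> V1 n" then show ?thesis using yy unfolding B1_def by blast
    next
      assume "y' \<in> V1 n" then have "(y', y) \<in> V1 n \<times> C0 n" using yy by auto
      moreover have "e = {y', y}" using yy by auto
      ultimately show ?thesis unfolding B1_def by blast
    qed
  next
    case False
    then obtain a b c d where ab: "1 \<le> a" "a < b" "b \<le> n" "y = s a b"
      and cd: "1 \<le> c" "c < d" "d \<le> n" "y' = s c d"
      using yy by (auto simp: C0_alt)
    show ?thesis
    proof (cases "a = c \<or> a = d \<or> b = c \<or> b = d")
      case True
      have "a = c \<Longrightarrow> e = {s a b, s a d}" "a = d \<Longrightarrow> e = {s a b, s a c}"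
        "b = c \<Longrightarrow> e = {s b a, s b d}" "b = d \<Longrightarrow> e = {s b a, s b c}"
        using yy ab cd s_comm by metis+
      then have "e \<in> B2 n" using True ab cd unfolding B2_def
        by (elim disjE) (force intro!: image_eqI)+
      then show ?thesis by simp
    next
      case False
      have "good_e e"
        unfolding good_e_def
      proof (intro allI impI)
        fix z z' assume zz: "{z, z'} = e \<and> z \<noteq> z'"
        then have "(z = y \<and> z' = y') \<or> (z = y' \<and> z' = y)" using yy by (metis doubleton_eq_iff)
        then show "card {i. z' i - z i \<noteq> 0} = 4"
        proof
          assume "z = y \<and> z' = y'" then show ?thesis using good4[of a b c d] False ab cd by auto
        next
          assume "z = y' \<and> z' = y" then show ?thesis using good4[of c d a b] False ab cd by auto
        qed
      qed
      then show ?thesis using e by simp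
    qed
  qed
qed

lemma card_bad: "card {e \<in> edges (C0 n). \<not> good_e e} \<le> (2 * n + 1) * card (C0 n) + n ^ 3"
proof -
  have "card {e \<in> edges (C0 n). \<not> good_e e} \<le> card (B1 n \<union> B2 n)"
    using bad_sub by (rule card_mono[rotated]) (simp add: B1_def B2_def finite_C0 V1_def)
  also have "\<dots> \<le> card (B1 n) + card (B2 n)" by (rule card_Un_le)
  also have "card (B1 n) \<le> card (V1 n \<times> C0 n)" unfolding B1_def by (rule card_image_le) (simp add: finite_C0 V1_def)
  also have "\<dots> = card (V1 n) * card (C0 n)" by (simp add: card_cartesian_product)
  also have "\<dots> \<le> (2 * n + 1) * card (C0 n)" using mult_right_mono[OF card_V1] by blast
  also have "card (B2 n) \<le> card ({1..n}\<times>{1..n}\<times>{1..n})" unfolding B2_def by (rule card_image_le) simp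
  also have "\<dots> = n ^ 3" by (simp add: card_cartesian_product power3_eq_cube)
  finally show ?thesis by simp
qed



lemma choose2_real: "real (N choose 2) = real N * (real N - 1) / 2"
proof -
  have "even (N * (N - 1))" by (cases "even N") auto
  then have "(N choose 2) * 2 = N * (N - 1)" by (simp add: choose_two)
  then have "real (N choose 2) * 2 = real N * real (N - 1)" by (metis of_nat_mult of_nat_numeral)
  moreover have "real (N - 1) = real N - 1" if "N \<ge> 1" using that by simp
  ultimately show ?thesis by (cases "N = 0") auto
qed

lemma main_n:
  fixes K :: nat and q :: real
  assumes n: "n \<ge> 30" and K: "K > 0" and q: "0 < q" "q < 1"
  shows "er_cond_prob n q {E. all_reactions_four E} {E. k_paired K E} \<ge> 1 - 21 * real K / real n"
proof -
  define V where "V = C0 n"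
  define w where "w = q ^ K * (1 - q) ^ (card (possible_edges n) - K)"
  have wpos: "w > 0" using q by (simp add: w_def)
  have S1: "{E. k_paired K E} \<inter> Pow (possible_edges n) = mat V K"
    unfolding k_paired_def mat_def pe V_def by blast
  have ar: "all_reactions_four E \<longleftrightarrow> (\<forall>e\<in>E. good_e e)" for E
    unfolding all_reactions_four_def good_e_def by blast
  have S2: "({E. all_reactions_four E} \<inter> {E. k_paired K E}) \<inter> Pow (possible_edges n)
      = {M \<in> mat V K. \<forall>e\<in>M. good_e e}"
  proof -
    have "({E. all_reactions_four E} \<inter> {E. k_paired K E}) \<inter> Pow (possible_edges n)
      = {M \<in> {E. k_paired K E} \<inter> Pow (possible_edges n). \<forall>e\<in>M. good_e e}" using ar by blast
    then show ?thesis unfolding S1 .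
  qed
  have P1: "er_prob n q {E. k_paired K E} = real (card (mat V K)) * w"
  proof -
    have "er_prob n q {E. k_paired K E} = (\<Sum>E\<in>mat V K. w)"
      unfolding er_prob_def S1 by (rule sum.cong) (auto simp: mat_def w_def)
    then show ?thesis by simp
  qed
  have P2: "er_prob n q ({E. all_reactions_four E} \<inter> {E. k_paired K E}) = real (card {M \<in> mat V K. \<forall>e\<in>M. good_e e}) * w"
  proof -
    have "er_prob n q ({E. all_reactions_four E} \<inter> {E. k_paired K E}) = (\<Sum>E\<in>{M \<in> mat V K. \<forall>e\<in>M. good_e e}. w)"
      unfolding er_prob_def S2 by (rule sum.cong) (auto simp: mat_def w_def)
    then show ?thesis by simp
  qed
  have cond: "er_cond_prob n q {E. all_reactions_four E} {E. k_paired K E}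
     = real (card {M \<in> mat V K. \<forall>e\<in>M. good_e e}) / real (card (mat V K))"
    unfolding er_cond_prob_def P1 P2 using wpos by simp
  show ?thesis
  proof (cases "21 * K \<ge> n")
    case True
    then have "1 - 21 * real K / real n \<le> 0" using n by (simp add: field_simps)
    moreover have "real (card {M \<in> mat V K. \<forall>e\<in>M. good_e e}) / real (card (mat V K)) \<ge> 0" by simp
    ultimately show ?thesis using cond by linarith
  next
    case False
    define N where "N = card V"
    have fV: "finite V" by (simp add: V_def finite_C0)
    have cN: "real n * (real n - 1) \<le> 2 * real N"
    proof -
      have "real (n choose 2) \<le> real N" using card_C0[of n] unfolding N_def V_def by (simp only: of_nat_le_iff)
      then show ?thesis using choose2_real[of n] by simp
    qed
    have h3: "real n * 3 \<le> real n * (real n - 1)" using n by (intro mult_left_mono) auto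
    note h3
    moreover have "21 * real K < real n" using False by (simp flip: of_nat_mult)
    ultimately have "2 * real K \<le> real N" using cN by linarith
    then have "real (2 * K) \<le> real N" by simp
    then have "2 * K \<le> N" by (simp only: of_nat_le_iff)
    then have ne: "mat V K \<noteq> {}" using mat_exists[OF fV] unfolding N_def by blast
    have rb: "real (card {M \<in> mat V K. \<forall>e\<in>M. good_e e}) / real (card (mat V K))
       \<ge> 1 - real K * real (card {e \<in> edges V. \<not> good_e e}) / real (card (edges V))"
      using ratio_bound[OF fV _ ne, of good_e] K by linarith
    define Bd where "Bd = card {e \<in> edges V. \<not> good_e e}"
    define Ed where "Ed = card (edges V)"
    have Ed: "real Ed = real N * (real N - 1) / 2"
    proof -
      have "card (edges V) = N choose 2" unfolding edges_def N_def by (rule n_subsets[OF fV])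
      then show ?thesis unfolding Ed_def using choose2_real by simp
    qed
    have Bd: "real Bd \<le> (2 * real n + 1) * real N + real n ^ 3"
    proof -
      have "Bd \<le> (2 * n + 1) * N + n ^ 3" using card_bad[of n] unfolding Bd_def N_def V_def .
      then have "real Bd \<le> real ((2 * n + 1) * N + n ^ 3)" by (simp only: of_nat_le_iff)
      then show ?thesis by (simp add: algebra_simps)
    qed
    have am: "real n * ((2 * real n + 1) * real N + real n ^ 3) \<le> 21 * (real N * (real N - 1) / 2)"
      by (rule arith_main[OF _ cN]) (use n in simp)
    have "real n * real Bd \<le> real n * ((2 * real n + 1) * real N + real n ^ 3)"
      using Bd by (intro mult_left_mono) auto
    then have nB: "real n * real Bd \<le> 21 * real Ed" using am Ed by linarith
    have Edpos: "real Ed > 0"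
    proof -
      have "real n * 3 \<ge> 90" using n by simp
      then have "real N \<ge> 45" using h3 cN by linarith
      then have "real N * (real N - 1) \<ge> 45 * 44" by (intro mult_mono) auto
      then show ?thesis using Ed by linarith
    qed
    have "real K * real Bd / real Ed \<le> 21 * real K / real n"
    proof -
      have npos: "real n > 0" using n by simp
      have "real K * (real n * real Bd) \<le> real K * (21 * real Ed)" using nB by (intro mult_left_mono) auto
      have "real K * real Bd / real Ed = (real K * (real n * real Bd)) / (real n * real Ed)"
        using npos Edpos by simp
      also have "\<dots> \<le> (real K * (21 * real Ed)) / (real n * real Ed)"
        using \<open>real K * (real n * real Bd) \<le> real K * (21 * real Ed)\<close> npos Edpos
        by (intro divide_right_mono) auto
      also have "\<dots> = 21 * real K / real n" using Edpos by simp
      finally show ?thesis .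
    qed
    then show ?thesis using rb cond unfolding Bd_def Ed_def by linarith
  qed
qed


theorem mainTheorem8:
  fixes k :: "nat \<Rightarrow> nat" and p :: "nat \<Rightarrow> real"
  assumes "\<forall>n. k n > 0"
    and "(\<lambda>n. real (k n) / real n) \<longlonglongrightarrow> 0"
    and "\<forall>n. 0 < p n \<and> p n < 1"
  shows "\<forall>\<^sub>F n in sequentially.
     er_cond_prob n (p n) {E. all_reactions_four E} {E. k_paired (k n) E}
       \<ge> 1 - 21 * real (k n) / real n"
proof (rule eventually_sequentiallyI[of 30])
  fix n :: nat assume "30 \<le> n"
  then show "er_cond_prob n (p n) {E. all_reactions_four E} {E. k_paired (k n) E}
       \<ge> 1 - 21 * real (k n) / real n"
    using main_n[of n "k n" "p n"] assms(1,3) by auto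
qed

end
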